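(* Let $n\geq2$ and let $\mathbb{F}$ be a field. Then the reduct $\widetilde H_n(\mathbb{F})/\sim$ is isomorphic to $H_n(\mathbb{F})$.
   Context: Let $V=\mathbb{F}^{n+1}$ with dual $V^*$. $H_n(\mathbb{F})$ is the graph whose vertices are pairs $(x,X)$ with $x$ a point and $X$ a hyperplane of the projective space $\mathbb{P}(V)$ with $x\not\subset X$, where $(x,X)\perp(y,Y)$ iff $x\subset Y$ and $y\subset X$. $\widetilde H_n(\mathbb{F})$ is the graph with vertex set $\{v\otimes f\in V\otimes V^*: v\in V, f\in V^*, f(v)\neq0\}$ in which $v\otimes f\perp w\otimes g$ iff $f(w)=g(v)=0$. For a graph, $u\sim v$ iff $u,v$ have the same neighbourhood; the reduct $\Gamma/\sim$ has the $\sim$-classes as vertices, with adjacency inherited from representatives. *)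

theory Defs
  imports "HOL-Analysis.Analysis"
begin

text \<open>V = F^(n+1) is modelled as the type 'a ^ 'n with CARD('n) = n+1.
  The dual space V* is the set of F-linear functionals V \<Rightarrow> F.\<close>

definition dual_space :: "('a::field ^ 'n \<Rightarrow> 'a) set" where
  "dual_space = {f. (\<forall>v w. f (v + w) = f v + f w) \<and> (\<forall>c v. f (c *s v) = c * f v)}"

definition proj_point :: "'a::field ^ 'n \<Rightarrow> ('a ^ 'n) set" where
  "proj_point v = range (\<lambda>c. c *s v)"

definition proj_points :: "('a::field ^ 'n) set set" where
  "proj_points = {proj_point v | v. v \<noteq> 0}"

definition proj_hyperplanes :: "('a::field ^ 'n) set set" where
  "proj_hyperplanes = {{w. f w = 0} | f. f \<in> dual_space \<and> f \<noteq> (\<lambda>_. 0)}"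

definition H_verts :: "(('a::field ^ 'n) set \<times> ('a ^ 'n) set) set" where
  "H_verts = {(x, X). x \<in> proj_points \<and> X \<in> proj_hyperplanes \<and> \<not> x \<subseteq> X}"

definition H_adj :: "('a::field ^ 'n) set \<times> ('a ^ 'n) set \<Rightarrow> ('a ^ 'n) set \<times> ('a ^ 'n) set \<Rightarrow> bool" where
  "H_adj p q = (fst p \<subseteq> snd q \<and> fst q \<subseteq> snd p)"

text \<open>V \<otimes> V* is identified with End(V) canonically: v \<otimes> f is the map w \<mapsto> f(w) v.\<close>

definition tensor :: "'a::field ^ 'n \<Rightarrow> ('a ^ 'n \<Rightarrow> 'a) \<Rightarrow> ('a ^ 'n \<Rightarrow> 'a ^ 'n)" where
  "tensor v f = (\<lambda>w. f w *s v)"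

definition Ht_verts :: "('a::field ^ 'n \<Rightarrow> 'a ^ 'n) set" where
  "Ht_verts = {tensor v f | v f. f \<in> dual_space \<and> f v \<noteq> 0}"

definition Ht_adj :: "('a::field ^ 'n \<Rightarrow> 'a ^ 'n) \<Rightarrow> ('a ^ 'n \<Rightarrow> 'a ^ 'n) \<Rightarrow> bool" where
  "Ht_adj T S = (\<exists>v f w g. T = tensor v f \<and> S = tensor w g \<and> f \<in> dual_space \<and> g \<in> dual_space
       \<and> f v \<noteq> 0 \<and> g w \<noteq> 0 \<and> f w = 0 \<and> g v = 0)"

definition nbhd :: "'v set \<Rightarrow> ('v \<Rightarrow> 'v \<Rightarrow> bool) \<Rightarrow> 'v \<Rightarrow> 'v set" where
  "nbhd V E u = {w \<in> V. E u w}"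

definition reduct_verts :: "'v set \<Rightarrow> ('v \<Rightarrow> 'v \<Rightarrow> bool) \<Rightarrow> 'v set set" where
  "reduct_verts V E = (\<lambda>u. {w \<in> V. nbhd V E w = nbhd V E u}) ` V"

definition reduct_adj :: "('v \<Rightarrow> 'v \<Rightarrow> bool) \<Rightarrow> 'v set \<Rightarrow> 'v set \<Rightarrow> bool" where
  "reduct_adj E C D = (\<exists>u\<in>C. \<exists>w\<in>D. E u w)"

definition graph_iso :: "'v set \<Rightarrow> ('v \<Rightarrow> 'v \<Rightarrow> bool) \<Rightarrow> 'w set \<Rightarrow> ('w \<Rightarrow> 'w \<Rightarrow> bool) \<Rightarrow> bool" where
  "graph_iso V1 E1 V2 E2 = (\<exists>\<phi>. bij_betw \<phi> V1 V2 \<and> (\<forall>u\<in>V1. \<forall>w\<in>V1. E1 u w \<longleftrightarrow> E2 (\<phi> u) (\<phi> w)))"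

end

theory Submission
  imports Defs
begin

lemma dual_smult: "f \<in> dual_space \<Longrightarrow> f (c *s v) = c * f v"
  by (simp add: dual_space_def)

lemma dual_add: "f \<in> dual_space \<Longrightarrow> f (v + w) = f v + f w"
  by (simp add: dual_space_def)

lemma dual_zero: "f \<in> dual_space \<Longrightarrow> f 0 = 0"
  using dual_smult[of f 0 0] by simp

lemma dual_diff: "f \<in> dual_space \<Longrightarrow> f (v - w) = f v - f w"
proof -
  assume f: "f \<in> dual_space"
  have "v - w = v + (-1) *s w" by (simp add: vec_eq_iff)
  then have "f (v - w) = f (v + (-1) *s w)" by simp
  also have "\<dots> = f v + f ((-1) *s w)" by (rule dual_add[OF f])
  also have "\<dots> = f v + (-1) * f w" by (simp only: dual_smult[OF f])
  finally show ?thesis by simp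
qed

lemma mem_proj_point: "u \<in> proj_point v \<longleftrightarrow> (\<exists>c. u = c *s v)"
  by (auto simp: proj_point_def)

lemma self_proj_point: "v \<in> proj_point v"
  unfolding mem_proj_point by (rule exI[of _ 1]) (simp add: vec_eq_iff)

lemma proj_point_sub_ker: "f \<in> dual_space \<Longrightarrow> proj_point v \<subseteq> {u. f u = 0} \<longleftrightarrow> f v = 0"
proof
  assume "f \<in> dual_space" "proj_point v \<subseteq> {u. f u = 0}"
  then show "f v = 0" using self_proj_point[of v] by blast
next
  assume "f \<in> dual_space" "f v = 0"
  then show "proj_point v \<subseteq> {u. f u = 0}" by (auto simp: mem_proj_point dual_smult)
qed

lemma L1:
  fixes a v :: "'a::field ^ 'n"
  assumes a: "a \<noteq> 0" and v: "\<forall>c. v \<noteq> c *s a"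
  shows "\<exists>h\<in>dual_space. h a = 0 \<and> h v \<noteq> 0"
proof -
  obtain k where k: "a $ k \<noteq> 0" using a by (auto simp: vec_eq_iff)
  define u where "u = v - (v $ k / a $ k) *s a"
  have "u \<noteq> 0"
  proof
    assume "u = 0"
    then have "v = (v $ k / a $ k) *s a" unfolding u_def by simp
    with v show False by blast
  qed
  then obtain j where j: "u $ j \<noteq> 0" by (auto simp: vec_eq_iff)
  define r where "r = a $ j / a $ k"
  define h where "h = (\<lambda>w::'a^'n. w $ j - r * w $ k)"
  have hd: "h \<in> dual_space" unfolding dual_space_def h_def
    by (simp add: algebra_simps)
  have "h a = 0" unfolding h_def r_def using k by simp
  moreover have hv: "h v = u $ j" unfolding h_def u_def r_def using k by (simp add: field_simps)
  then have "h v \<noteq> 0" using j by simp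
  ultimately show ?thesis using hd by blast
qed

definition psi :: "('a::field ^ 'n \<Rightarrow> 'a ^ 'n) \<Rightarrow> ('a ^ 'n) set \<times> ('a ^ 'n) set" where
  "psi T = (range T, {u. T u = 0})"

lemma psi_tensor:
  assumes f: "f \<in> dual_space" and fv: "f v \<noteq> 0"
  shows "psi (tensor v f) = (proj_point v, {u. f u = 0})"
proof -
  have v0: "v \<noteq> 0" using fv dual_zero[OF f] by auto
  have "range (tensor v f) = proj_point v"
  proof
    show "range (tensor v f) \<subseteq> proj_point v"
      by (auto simp: tensor_def mem_proj_point)
    show "proj_point v \<subseteq> range (tensor v f)"
    proof
      fix u assume "u \<in> proj_point v"
      then obtain c where c: "u = c *s v" by (auto simp: mem_proj_point)
      have "f ((c / f v) *s v) = c" using fv by (simp add: dual_smult[OF f])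
      then have "u = tensor v f ((c / f v) *s v)" by (simp add: tensor_def c)
      then show "u \<in> range (tensor v f)" by blast
    qed
  qed
  moreover have "{u. tensor v f u = 0} = {u. f u = 0}"
    using v0 by (simp add: tensor_def)
  ultimately show ?thesis by (simp add: psi_def)
qed

lemma H_verts_I:
  assumes a: "a \<noteq> 0" and f: "f \<in> dual_space" and fa: "f a \<noteq> 0"
  shows "(proj_point a, {w. f w = 0}) \<in> H_verts"
proof -
  have f0: "f \<noteq> (\<lambda>_. 0)" using fa by auto
  have 1: "proj_point a \<in> proj_points" unfolding proj_points_def using a by blast
  have 2: "{w. f w = 0} \<in> proj_hyperplanes" unfolding proj_hyperplanes_def using f f0 by blast
  have 3: "\<not> proj_point a \<subseteq> {w. f w = 0}" using proj_point_sub_ker[OF f, of a] fa by simp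
  show ?thesis unfolding H_verts_def using 1 2 3 by simp
qed

lemma F1: "T \<in> Ht_verts \<Longrightarrow> psi T \<in> H_verts"
proof -
  assume "T \<in> Ht_verts"
  then obtain v f where T: "T = tensor v f" and f: "f \<in> dual_space" and fv: "f v \<noteq> 0"
    unfolding Ht_verts_def by blast
  have v0: "v \<noteq> 0" using fv dual_zero[OF f] by auto
  show ?thesis unfolding T psi_tensor[OF f fv] by (rule H_verts_I[OF v0 f fv])
qed

lemma H_verts_E:
  assumes "P \<in> H_verts"
  obtains a f where "P = (proj_point a, {w. f w = 0})" "a \<noteq> 0" "f \<in> dual_space" "f a \<noteq> 0"
proof -
  obtain x X where P: "P = (x, X)" "x \<in> proj_points" "X \<in> proj_hyperplanes" "\<not> x \<subseteq> X"
    using assms unfolding H_verts_def by blast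
  obtain a where a: "x = proj_point a" "a \<noteq> 0" using P(2) unfolding proj_points_def by blast
  obtain f where f: "X = {w. f w = 0}" "f \<in> dual_space" using P(3) unfolding proj_hyperplanes_def by blast
  have "f a \<noteq> 0" using P(4) proj_point_sub_ker[OF f(2), of a] a f by simp
  then show ?thesis using that P a f by blast
qed

lemma F2: "P \<in> H_verts \<Longrightarrow> \<exists>T\<in>Ht_verts. psi T = P"
proof -
  assume "P \<in> H_verts"
  then obtain a f where "P = (proj_point a, {w. f w = 0})" "a \<noteq> 0" "f \<in> dual_space" "f a \<noteq> 0"
    by (rule H_verts_E)
  then show ?thesis using psi_tensor[of f a] by (auto simp: Ht_verts_def)
qed

lemma F3: "Ht_adj T S \<longleftrightarrow> T \<in> Ht_verts \<and> S \<in> Ht_verts \<and> H_adj (psi T) (psi S)"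
proof
  assume "Ht_adj T S"
  then obtain v f w g where A: "T = tensor v f" "S = tensor w g" "f \<in> dual_space" "g \<in> dual_space"
       "f v \<noteq> 0" "g w \<noteq> 0" "f w = 0" "g v = 0" by (auto simp: Ht_adj_def)
  then show "T \<in> Ht_verts \<and> S \<in> Ht_verts \<and> H_adj (psi T) (psi S)"
    using psi_tensor[of f v] psi_tensor[of g w] proj_point_sub_ker[of f w] proj_point_sub_ker[of g v]
    by (auto simp: Ht_verts_def H_adj_def)
next
  assume B: "T \<in> Ht_verts \<and> S \<in> Ht_verts \<and> H_adj (psi T) (psi S)"
  then obtain v f w g where A: "T = tensor v f" "S = tensor w g" "f \<in> dual_space" "g \<in> dual_space"
       "f v \<noteq> 0" "g w \<noteq> 0" by (auto simp: Ht_verts_def)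
  have "f w = 0" "g v = 0"
    using B A psi_tensor[of f v] psi_tensor[of g w] proj_point_sub_ker[of f w] proj_point_sub_ker[of g v]
    by (auto simp: H_adj_def)
  then show "Ht_adj T S" using A unfolding Ht_adj_def by blast
qed

lemma F4a:
  assumes P: "P \<in> H_verts"
  shows "w \<in> snd P \<longleftrightarrow> (w = 0 \<or> (\<exists>R\<in>H_verts. H_adj P R \<and> w \<in> fst R))"
proof -
  obtain a f where P1: "P = (proj_point a, {w. f w = 0})" and a: "a \<noteq> 0"
    and f: "f \<in> dual_space" and fa: "f a \<noteq> 0" using P by (rule H_verts_E)
  show ?thesis
  proof
    assume w: "w \<in> snd P"
    show "w = 0 \<or> (\<exists>R\<in>H_verts. H_adj P R \<and> w \<in> fst R)"
    proof (cases "w = 0")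
      case False
      have fw: "f w = 0" using w P1 by simp
      have "\<forall>c. w \<noteq> c *s a"
      proof (intro allI notI)
        fix c assume "w = c *s a"
        then have "c * f a = 0" using fw dual_smult[OF f] by simp
        then have "c = 0" using fa by simp
        then show False using False \<open>w = c *s a\<close> by simp
      qed
      then obtain h where h: "h \<in> dual_space" "h a = 0" "h w \<noteq> 0" using L1[OF a] by blast
      define R where "R = (proj_point w, {u. h u = 0})"
      have "R \<in> H_verts" unfolding R_def using H_verts_I[OF False h(1) h(3)] .
      moreover have "H_adj P R" unfolding R_def P1 H_adj_def
        using proj_point_sub_ker[OF h(1), of a] proj_point_sub_ker[OF f, of w] h fw by simp
      moreover have "w \<in> fst R" unfolding R_def by (simp add: self_proj_point)
      ultimately show ?thesis by blast
    qed simp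
  next
    assume "w = 0 \<or> (\<exists>R\<in>H_verts. H_adj P R \<and> w \<in> fst R)"
    then show "w \<in> snd P"
      using P1 dual_zero[OF f] by (auto simp: H_adj_def)
  qed
qed

lemma F4b:
  assumes P: "P \<in> H_verts"
  shows "v \<in> fst P \<longleftrightarrow> (\<forall>R\<in>H_verts. H_adj P R \<longrightarrow> v \<in> snd R)"
proof -
  obtain a f where P1: "P = (proj_point a, {w. f w = 0})" and a: "a \<noteq> 0"
    and f: "f \<in> dual_space" and fa: "f a \<noteq> 0" using P by (rule H_verts_E)
  show ?thesis
  proof
    assume "v \<in> fst P"
    then show "\<forall>R\<in>H_verts. H_adj P R \<longrightarrow> v \<in> snd R" by (auto simp: H_adj_def)
  next
    assume all: "\<forall>R\<in>H_verts. H_adj P R \<longrightarrow> v \<in> snd R"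
    show "v \<in> fst P"
    proof (rule ccontr)
      assume "v \<notin> fst P"
      then have "\<forall>c. v \<noteq> c *s a" using P1 by (auto simp: mem_proj_point)
      then obtain h where h: "h \<in> dual_space" "h a = 0" "h v \<noteq> 0" using L1[OF a] by blast
      define c where "c = v - (f v / f a) *s a"
      have fc: "f c = 0" unfolding c_def using fa by (simp add: dual_diff[OF f] dual_smult[OF f])
      have hc: "h c \<noteq> 0" unfolding c_def using h by (simp add: dual_diff[OF h(1)] dual_smult[OF h(1)])
      have c0: "c \<noteq> 0" using hc dual_zero[OF h(1)] by auto
      define R where "R = (proj_point c, {u. h u = 0})"
      have "R \<in> H_verts" unfolding R_def using H_verts_I[OF c0 h(1) hc] .
      moreover have "H_adj P R" unfolding R_def P1 H_adj_def
        using proj_point_sub_ker[OF h(1), of a] proj_point_sub_ker[OF f, of c] h fc by simp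
      ultimately have "v \<in> snd R" using all by blast
      then show False using h unfolding R_def by simp
    qed
  qed
qed

lemma F4:
  assumes P: "P \<in> H_verts" and Q: "Q \<in> H_verts"
    and N: "\<forall>R\<in>H_verts. H_adj P R \<longleftrightarrow> H_adj Q R"
  shows "P = Q"
proof -
  have "fst P = fst Q"
  proof (rule set_eqI)
    fix v
    show "v \<in> fst P \<longleftrightarrow> v \<in> fst Q"
      unfolding F4b[OF P] F4b[OF Q] using N by auto
  qed
  moreover have "snd P = snd Q"
  proof (rule set_eqI)
    fix v
    show "v \<in> snd P \<longleftrightarrow> v \<in> snd Q"
      unfolding F4a[OF P] F4a[OF Q] using N by auto
  qed
  ultimately show ?thesis by (simp add: prod_eq_iff)
qed

lemma nbhd_iff:
  fixes T T' :: "'a::field ^ 'n \<Rightarrow> 'a ^ 'n"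
  assumes T: "T \<in> Ht_verts" and T': "T' \<in> Ht_verts"
  shows "nbhd Ht_verts Ht_adj T = nbhd Ht_verts Ht_adj T' \<longleftrightarrow> psi T = psi T'"
proof
  assume eq: "nbhd Ht_verts Ht_adj T = nbhd Ht_verts Ht_adj T'"
  have "\<forall>R\<in>H_verts. H_adj (psi T) R \<longleftrightarrow> H_adj (psi T') R"
  proof
    fix R :: "('a ^ 'n) set \<times> ('a ^ 'n) set" assume "R \<in> H_verts"
    then obtain S :: "'a ^ 'n \<Rightarrow> 'a ^ 'n" where S: "S \<in> Ht_verts" "psi S = R" using F2 by blast
    have "S \<in> nbhd Ht_verts Ht_adj T \<longleftrightarrow> S \<in> nbhd Ht_verts Ht_adj T'" using eq by simp
    then show "H_adj (psi T) R \<longleftrightarrow> H_adj (psi T') R"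
      using S T T' by (simp add: nbhd_def F3)
  qed
  then show "psi T = psi T'" using F4 F1 T T' by blast
next
  assume "psi T = psi T'"
  then show "nbhd Ht_verts Ht_adj T = nbhd Ht_verts Ht_adj T'"
    using T T' by (auto simp: nbhd_def F3)
qed

theorem lemma3p1:
  assumes "CARD('n::finite) \<ge> 3"
  shows "graph_iso (reduct_verts (Ht_verts :: ('a::field ^ 'n \<Rightarrow> 'a ^ 'n) set) Ht_adj)
                   (reduct_adj Ht_adj)
                   (H_verts :: (('a ^ 'n) set \<times> ('a ^ 'n) set) set) H_adj"
proof -
  let ?V = "Ht_verts :: ('a::field ^ 'n \<Rightarrow> 'a ^ 'n) set"
  define cl :: "('a ^ 'n \<Rightarrow> 'a ^ 'n) \<Rightarrow> ('a ^ 'n \<Rightarrow> 'a ^ 'n) set" where "cl = (\<lambda>T. {S \<in> ?V. psi S = psi T})"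
  have clq: "(\<lambda>u. {w \<in> ?V. nbhd ?V Ht_adj w = nbhd ?V Ht_adj u}) T = cl T" if "T \<in> ?V" for T
    using nbhd_iff[OF _ that] unfolding cl_def by auto
  have RV: "reduct_verts ?V Ht_adj = cl ` ?V"
    unfolding reduct_verts_def using clq by (auto simp: image_def)
  define phi :: "('a ^ 'n \<Rightarrow> 'a ^ 'n) set \<Rightarrow> ('a ^ 'n) set \<times> ('a ^ 'n) set"
    where "phi = (\<lambda>C. psi (SOME S. S \<in> C))"
  have phi_cl: "phi (cl T) = psi T" if "T \<in> ?V" for T
  proof -
    have "T \<in> cl T" using that by (simp add: cl_def)
    then have "(SOME S. S \<in> cl T) \<in> cl T" by (rule someI[of "\<lambda>S. S \<in> cl T"])
    then show ?thesis unfolding phi_def cl_def by simp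
  qed
  have bij: "bij_betw phi (cl ` ?V) H_verts"
  proof (rule bij_betw_imageI)
    show "inj_on phi (cl ` ?V)"
    proof (rule inj_onI)
      fix C D assume "C \<in> cl ` ?V" "D \<in> cl ` ?V" "phi C = phi D"
      then obtain T T' where "T \<in> ?V" "T' \<in> ?V" "C = cl T" "D = cl T'" "psi T = psi T'"
        using phi_cl by auto
      then show "C = D" by (simp add: cl_def)
    qed
    show "phi ` cl ` ?V = H_verts"
    proof
      show "phi ` cl ` ?V \<subseteq> H_verts" using phi_cl F1 by auto
      show "H_verts \<subseteq> phi ` cl ` ?V"
      proof
        fix P :: "('a ^ 'n) set \<times> ('a ^ 'n) set" assume "P \<in> H_verts"
        then obtain T :: "'a ^ 'n \<Rightarrow> 'a ^ 'n" where "T \<in> ?V" "psi T = P" using F2 by blast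
        then show "P \<in> phi ` cl ` ?V" using phi_cl by (metis image_eqI)
      qed
    qed
  qed
  have adj: "reduct_adj Ht_adj (cl T) (cl T') \<longleftrightarrow> H_adj (phi (cl T)) (phi (cl T'))"
    if "T \<in> ?V" "T' \<in> ?V" for T T'
  proof -
    have "reduct_adj Ht_adj (cl T) (cl T') \<longleftrightarrow> H_adj (psi T) (psi T')"
    proof
      assume "reduct_adj Ht_adj (cl T) (cl T')"
      then obtain u w where "u \<in> cl T" "w \<in> cl T'" "Ht_adj u w" unfolding reduct_adj_def by blast
      then show "H_adj (psi T) (psi T')" unfolding cl_def using F3[of u w] by simp
    next
      assume "H_adj (psi T) (psi T')"
      then have "Ht_adj T T'" using F3[of T T'] that by simp
      moreover have "T \<in> cl T" "T' \<in> cl T'" using that unfolding cl_def by simp_all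
      ultimately show "reduct_adj Ht_adj (cl T) (cl T')" unfolding reduct_adj_def by blast
    qed
    then show ?thesis using phi_cl that by simp
  qed
  show ?thesis unfolding graph_iso_def RV
  proof (intro exI conjI ballI)
    show "bij_betw phi (cl ` ?V) H_verts" by (rule bij)
    fix C D assume "C \<in> cl ` ?V" "D \<in> cl ` ?V"
    then obtain T T' where "T \<in> ?V" "T' \<in> ?V" "C = cl T" "D = cl T'" by blast
    then show "reduct_adj Ht_adj C D \<longleftrightarrow> H_adj (phi C) (phi D)" using adj by simp
  qed
qed

end
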